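(* Let $\gamma\colon P\to Q$ be a flat Kummer homomorphism of quasi-fine and sharp commutative monoids, and let $A=Q/P$ with quotient map $m\colon Q\to A$. Then there exist canonical monoid homomorphisms $P_A\to P$ and $Q_A\to Q$ such that the diagram formed by $P_A\to P$, $Q_A\to Q$, $\gamma_A\colon P_A\to Q_A$, $\gamma\colon P\to Q$, the projection $Q_A\to A$, $(p,\lambda)\mapsto\lambda$, and $m\colon Q\to A$ commutes.
   Context: A monoid is sharp if $0$ is its only unit, quasi-fine if finitely generated and quasi-integral ($p+q=p\Rightarrow q=0$). $\gamma$ is Kummer if injective with every element of $Q$ having a positive multiple in $\gamma(P)$; flat if (integral) whenever $\gamma(p_1)+q_1=\gamma(p_2)+q_2$ there exist $q'\in Q$, $p_1',p_2'\in P$ with $q_i=\gamma(p_i')+q'$, $p_1+p_1'=p_2+p_2'$, and (additionally) whenever $\gamma(p_1)+q=\gamma(p_2)+q$ there exist $q'\in Q$, $p'\in P$ with $q=\gamma(p')+q'$, $p_1+p'=p_2+p'$. $A=Q/P$ is the cokernel, a finite abelian group. For an abelian group $A$, $P_A$ is the free commutative monoid on symbols $e_{\lambda,\lambda'}$ ($\lambda,\lambda'\in A$) modulo the congruence generated by $e_{\lambda,\lambda'}\sim e_{\lambda',\lambda}$, $e_{0,\lambda}\sim0$, $e_{\lambda,\lambda'}+e_{\lambda+\lambda',\lambda''}\sim e_{\lambda',\lambda''}+e_{\lambda'+\lambda'',\lambda}$; $Q_A$ is the set $P_A\times A$ with $(p,\lambda)+(p',\lambda')=(p+p'+e_{\lambda,\lambda'},\lambda+\lambda')$;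 $\gamma_A(p)=(p,0)$. *)

theory Defs
  imports "HOL-Library.Multiset"
begin

(* Commutative monoids are modelled as types of class comm_monoid_add (whole type = monoid). *)

definition mon_hom :: "('a::comm_monoid_add \<Rightarrow> 'b::comm_monoid_add) \<Rightarrow> bool" where
  "mon_hom f \<longleftrightarrow> f 0 = 0 \<and> (\<forall>x y. f (x + y) = f x + f y)"

definition mon_hom_on :: "'c set \<Rightarrow> ('c \<Rightarrow> 'c \<Rightarrow> 'c) \<Rightarrow> 'c \<Rightarrow> ('c \<Rightarrow> 'b::comm_monoid_add) \<Rightarrow> bool" where
  "mon_hom_on C add z f \<longleftrightarrow> f z = 0 \<and> (\<forall>x\<in>C. \<forall>y\<in>C. f (add x y) = f x + f y)"

definition sharp_mon :: "'a::comm_monoid_add itself \<Rightarrow> bool" where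
  "sharp_mon _ \<longleftrightarrow> (\<forall>x::'a. (\<exists>y. x + y = 0) \<longrightarrow> x = 0)"

definition fin_gen_mon :: "'a::comm_monoid_add itself \<Rightarrow> bool" where
  "fin_gen_mon _ \<longleftrightarrow> (\<exists>S::'a set. finite S \<and> (\<forall>x. \<exists>xs. set xs \<subseteq> S \<and> x = sum_list xs))"

definition quasi_integral_mon :: "'a::comm_monoid_add itself \<Rightarrow> bool" where
  "quasi_integral_mon _ \<longleftrightarrow> (\<forall>p q::'a. p + q = p \<longrightarrow> q = 0)"

definition quasi_fine_mon :: "'a::comm_monoid_add itself \<Rightarrow> bool" where
  "quasi_fine_mon T \<longleftrightarrow> fin_gen_mon T \<and> quasi_integral_mon T"

definition nmul :: "nat \<Rightarrow> 'a::comm_monoid_add \<Rightarrow> 'a" where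
  "nmul n q = (\<Sum>i<n. q)"

definition kummer_hom :: "('p::comm_monoid_add \<Rightarrow> 'q::comm_monoid_add) \<Rightarrow> bool" where
  "kummer_hom \<gamma> \<longleftrightarrow> inj \<gamma> \<and> (\<forall>q. \<exists>n>0. \<exists>p. \<gamma> p = nmul n q)"

definition flat_hom :: "('p::comm_monoid_add \<Rightarrow> 'q::comm_monoid_add) \<Rightarrow> bool" where
  "flat_hom \<gamma> \<longleftrightarrow>
     (\<forall>p1 p2 q1 q2. \<gamma> p1 + q1 = \<gamma> p2 + q2 \<longrightarrow>
        (\<exists>q' p1' p2'. q1 = \<gamma> p1' + q' \<and> q2 = \<gamma> p2' + q' \<and> p1 + p1' = p2 + p2')) \<and>
     (\<forall>p1 p2 q. \<gamma> p1 + q = \<gamma> p2 + q \<longrightarrow>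
        (\<exists>q' p'. q = \<gamma> p' + q' \<and> p1 + p' = p2 + p'))"

(* P_A: free commutative monoid on symbols e_{l,l'} (multisets of pairs) modulo the
   congruence generated by the three relations *)
inductive PA_rel :: "('a::comm_monoid_add \<times> 'a) multiset \<Rightarrow> ('a \<times> 'a) multiset \<Rightarrow> bool" where
  PA_swap: "PA_rel {#(l, l')#} {#(l', l)#}"
| PA_zero: "PA_rel {#(0, l)#} {#}"
| PA_cocycle: "PA_rel {#(l, l'), (l + l', l'')#} {#(l', l''), (l' + l'', l)#}"
| PA_refl: "PA_rel x x"
| PA_sym: "PA_rel x y \<Longrightarrow> PA_rel y x"
| PA_trans: "PA_rel x y \<Longrightarrow> PA_rel y z \<Longrightarrow> PA_rel x z"
| PA_add: "PA_rel x y \<Longrightarrow> PA_rel (x + z) (y + z)"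

definition PA_class :: "('a::comm_monoid_add \<times> 'a) multiset \<Rightarrow> ('a \<times> 'a) multiset set" where
  "PA_class x = {y. PA_rel x y}"

definition PA_carrier :: "('a::comm_monoid_add \<times> 'a) multiset set set" where
  "PA_carrier = range PA_class"

definition PA_plus :: "('a::comm_monoid_add \<times> 'a) multiset set \<Rightarrow> ('a \<times> 'a) multiset set \<Rightarrow> ('a \<times> 'a) multiset set" where
  "PA_plus X Y = PA_class ((SOME x. x \<in> X) + (SOME y. y \<in> Y))"

definition PA_zero_el :: "('a::comm_monoid_add \<times> 'a) multiset set" where
  "PA_zero_el = PA_class {#}"

definition PA_e :: "'a::comm_monoid_add \<Rightarrow> 'a \<Rightarrow> ('a \<times> 'a) multiset set" where
  "PA_e l l' = PA_class {#(l, l')#}"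

definition QA_carrier :: "(('a::comm_monoid_add \<times> 'a) multiset set \<times> 'a) set" where
  "QA_carrier = PA_carrier \<times> UNIV"

definition QA_plus :: "(('a::comm_monoid_add \<times> 'a) multiset set \<times> 'a) \<Rightarrow> (('a \<times> 'a) multiset set \<times> 'a) \<Rightarrow> (('a \<times> 'a) multiset set \<times> 'a)" where
  "QA_plus x y = (PA_plus (PA_plus (fst x) (fst y)) (PA_e (snd x) (snd y)), snd x + snd y)"

definition QA_zero_el :: "('a::comm_monoid_add \<times> 'a) multiset set \<times> 'a" where
  "QA_zero_el = (PA_zero_el, 0)"

definition gamma_A :: "('a::comm_monoid_add \<times> 'a) multiset set \<Rightarrow> ('a \<times> 'a) multiset set \<times> 'a" where
  "gamma_A p = (p, 0)"

end

theory Submission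
  imports Defs "HOL-Library.Ramsey"
begin

lemma mono_subseq_nat:
  fixes c :: "nat \<Rightarrow> nat"
  assumes "infinite Z"
  shows "\<exists>Y\<subseteq>Z. infinite Y \<and> (\<forall>i\<in>Y. \<forall>j\<in>Y. i < j \<longrightarrow> c i \<le> c j)"
proof -
  define f where "f X = (if c (Min X) \<le> c (Max X) then 0 else 1::nat)" for X :: "nat set"
  have part: "\<forall>x\<in>Z. \<forall>y\<in>Z. x \<noteq> y \<longrightarrow> f {x, y} < 2" by (simp add: f_def)
  obtain Y t where Y: "Y \<subseteq> Z" "infinite Y" "t < 2"
    and hom: "\<forall>x\<in>Y. \<forall>y\<in>Y. x\<noteq>y \<longrightarrow> f {x, y} = t"
    using Ramsey2[OF assms part] by blast
  show ?thesis
  proof (cases "t = 0")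
    case True
    have "\<forall>i\<in>Y. \<forall>j\<in>Y. i < j \<longrightarrow> c i \<le> c j"
    proof (intro ballI impI)
      fix i j assume "i \<in> Y" "j \<in> Y" "i < j"
      then have "f {i, j} = 0" using hom True by auto
      then show "c i \<le> c j" using \<open>i < j\<close> by (auto simp: f_def split: if_splits)
    qed
    then show ?thesis using Y by blast
  next
    case False
    then have dec: "\<forall>i\<in>Y. \<forall>j\<in>Y. i < j \<longrightarrow> c j < c i"
    proof (intro ballI impI)
      fix i j assume "i \<in> Y" "j \<in> Y" "i < j"
      then have "f {i, j} = 1" using hom False Y(3) by auto
      then show "c j < c i" using \<open>i < j\<close> by (auto simp: f_def split: if_splits)
    qed
    obtain i0 where i0: "i0 \<in> Y" using Y(2) by (metis finite.emptyI ex_in_conv)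
    define Y' where "Y' = {j\<in>Y. i0 \<le> j}"
    have "infinite Y'"
    proof
      assume "finite Y'"
      have "Y \<subseteq> Y' \<union> {..<i0}" unfolding Y'_def by auto
      then show False using \<open>finite Y'\<close> Y(2) by (meson finite_Un finite_lessThan finite_subset)
    qed
    moreover have "inj_on c Y'"
      unfolding inj_on_def Y'_def using dec by (metis (no_types, lifting) linorder_neqE_nat mem_Collect_eq nat_neq_iff)
    moreover have "c ` Y' \<subseteq> {..c i0}" unfolding Y'_def using dec i0 by (force simp: le_less)
    ultimately show ?thesis by (meson finite_atMost finite_imageD finite_subset)
  qed
qed

lemma dickson_subseq:
  fixes f :: "nat \<Rightarrow> 'b \<Rightarrow> nat"
  assumes "finite S"
  shows "infinite Z \<Longrightarrow> \<exists>Y\<subseteq>Z. infinite Y \<and> (\<forall>i\<in>Y. \<forall>j\<in>Y. i < j \<longrightarrow> (\<forall>s\<in>S. f i s \<le> f j s))"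
  using assms
proof (induction S arbitrary: Z rule: finite_induct)
  case empty
  then show ?case by blast
next
  case (insert x S)
  obtain Y where Y: "Y \<subseteq> Z" "infinite Y" "\<forall>i\<in>Y. \<forall>j\<in>Y. i < j \<longrightarrow> (\<forall>s\<in>S. f i s \<le> f j s)"
    using insert by blast
  obtain Y' where Y': "Y' \<subseteq> Y" "infinite Y'" "\<forall>i\<in>Y'. \<forall>j\<in>Y'. i < j \<longrightarrow> f i x \<le> f j x"
    using mono_subseq_nat[OF Y(2), of "\<lambda>i. f i x"] by blast
  have "\<forall>i\<in>Y'. \<forall>j\<in>Y'. i < j \<longrightarrow> (\<forall>s\<in>insert x S. f i s \<le> f j s)"
    using Y(3) Y'(1,3) by blast
  then show ?case using Y(1) Y'(1,2) by blast
qed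

lemma sum_mset_zero_sharp:
  fixes D :: "'q::comm_monoid_add multiset"
  assumes sh: "\<forall>x::'q. (\<exists>y. x + y = 0) \<longrightarrow> x = 0"
  shows "sum_mset D = 0 \<Longrightarrow> (\<forall>x\<in>#D. x \<noteq> 0) \<Longrightarrow> D = {#}"
proof (induction D)
  case empty
  then show ?case by simp
next
  case (add x D)
  then have "x + sum_mset D = 0" by simp
  then have "x = 0" using sh by blast
  then show ?case using add by simp
qed

lemma bounded_lengths:
  fixes S :: "'q::comm_monoid_add set"
  assumes fin: "finite S" and nz: "0 \<notin> S"
   and qi: "\<forall>p q::'q. p + q = p \<longrightarrow> q = 0"
   and sh: "\<forall>x::'q. (\<exists>y. x + y = 0) \<longrightarrow> x = 0"
  shows "finite {length xs | xs. set xs \<subseteq> S \<and> sum_list xs = q}"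
proof (rule ccontr)
  assume "infinite {length xs | xs. set xs \<subseteq> S \<and> sum_list xs = q}"
  then have "\<forall>n. \<exists>xs. set xs \<subseteq> S \<and> sum_list xs = q \<and> length xs > n"
    unfolding infinite_nat_iff_unbounded by blast
  then obtain xsf where xsf: "\<And>n. set (xsf n) \<subseteq> S \<and> sum_list (xsf n) = q \<and> length (xsf n) > n"
    by metis
  obtain Y where Y: "infinite Y"
    "\<forall>i\<in>Y. \<forall>j\<in>Y. i < j \<longrightarrow> (\<forall>s\<in>S. count (mset (xsf i)) s \<le> count (mset (xsf j)) s)"
    using dickson_subseq[OF fin, of "UNIV" "\<lambda>n s. count (mset (xsf n)) s"] by auto
  obtain i where i: "i \<in> Y" using Y(1) by (metis finite.emptyI ex_in_conv)
  obtain j where j: "j \<in> Y" "j > i + length (xsf i)"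
    using Y(1) unfolding infinite_nat_iff_unbounded by blast
  have sub: "mset (xsf i) \<subseteq># mset (xsf j)"
    unfolding subseteq_mset_def
  proof
    fix a
    show "count (mset (xsf i)) a \<le> count (mset (xsf j)) a"
    proof (cases "a \<in> S")
      case True
      then show ?thesis using Y(2) i j by auto
    next
      case False
      then have "a \<notin> set (xsf i)" using xsf by blast
      then show ?thesis by (metis count_eq_zero_iff set_mset_mset le0)
    qed
  qed
  define D where "D = mset (xsf j) - mset (xsf i)"
  have eq: "mset (xsf j) = mset (xsf i) + D"
    unfolding D_def using sub by (metis subset_mset.add_diff_inverse)
  have "q = q + sum_mset D"
    using arg_cong[OF eq, of sum_mset] xsf[of i] xsf[of j] by (simp add: sum_mset_sum_list)
  then have "sum_mset D = 0" using qi by metis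
  moreover have "\<forall>x\<in>#D. x \<noteq> 0"
  proof
    fix x assume "x \<in># D"
    then have "x \<in># mset (xsf j)" using eq by simp
    then show "x \<noteq> 0" using xsf[of j] nz by auto
  qed
  ultimately have "D = {#}" using sum_mset_zero_sharp[OF sh] by blast
  then have "length (xsf j) = length (xsf i)" using arg_cong[OF eq, of size] by simp
  then show False using j xsf[of j] by simp
qed


lemma sum_list_filter_nz: "sum_list (filter (\<lambda>x. x \<noteq> 0) xs) = sum_list (xs :: 'q::comm_monoid_add list)"
  by (induction xs) auto

theorem proposition5p35:
  fixes \<gamma> :: "'p::comm_monoid_add \<Rightarrow> 'q::comm_monoid_add"
    and m :: "'q \<Rightarrow> 'a::comm_monoid_add"
  assumes "mon_hom \<gamma>"
    and "quasi_fine_mon TYPE('p)" and "sharp_mon TYPE('p)"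
    and "quasi_fine_mon TYPE('q)" and "sharp_mon TYPE('q)"
    and "flat_hom \<gamma>" and "kummer_hom \<gamma>"
    and "mon_hom m" and "surj m"
    and "\<forall>q1 q2. m q1 = m q2 \<longleftrightarrow> (\<exists>p1 p2. q1 + \<gamma> p1 = q2 + \<gamma> p2)"
  shows "\<exists>(g :: ('a \<times> 'a) multiset set \<Rightarrow> 'p) (h :: ('a \<times> 'a) multiset set \<times> 'a \<Rightarrow> 'q).
           mon_hom_on PA_carrier PA_plus PA_zero_el g \<and>
           mon_hom_on QA_carrier QA_plus QA_zero_el h \<and>
           (\<forall>p\<in>PA_carrier. h (gamma_A p) = \<gamma> (g p)) \<and>
           (\<forall>x\<in>QA_carrier. m (h x) = snd x)"
proof -
  note hom = assms(1) and flat = assms(6) and kum = assms(7) and mh = assms(8)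
    and sur = assms(9) and eqv = assms(10)
  have g0: "\<gamma> 0 = 0" and gadd: "\<And>x y. \<gamma> (x + y) = \<gamma> x + \<gamma> y"
    using hom unfolding mon_hom_def by auto
  have m0: "m 0 = 0" and madd: "\<And>x y. m (x + y) = m x + m y"
    using mh unfolding mon_hom_def by auto
  have injg: "inj \<gamma>" using kum unfolding kummer_hom_def by auto
  have flat1: "\<And>p1 p2 q1 q2. \<gamma> p1 + q1 = \<gamma> p2 + q2 \<Longrightarrow>
        (\<exists>q' p1' p2'. q1 = \<gamma> p1' + q' \<and> q2 = \<gamma> p2' + q' \<and> p1 + p1' = p2 + p2')"
    and flat2: "\<And>p1 p2 q. \<gamma> p1 + q = \<gamma> p2 + q \<Longrightarrow>
        (\<exists>q' p'. q = \<gamma> p' + q' \<and> p1 + p' = p2 + p')"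
    using flat unfolding flat_hom_def by blast+
  have qiQ: "\<forall>p q::'q. p + q = p \<longrightarrow> q = 0"
    using assms(4) unfolding quasi_fine_mon_def quasi_integral_mon_def by blast
  have shQ: "\<forall>x::'q. (\<exists>y. x + y = 0) \<longrightarrow> x = 0"
    using assms(5) unfolding sharp_mon_def by blast
  have shP: "\<forall>x::'p. (\<exists>y. x + y = 0) \<longrightarrow> x = 0"
    using assms(3) unfolding sharp_mon_def by blast
  have mg: "m (\<gamma> p) = 0" for p
  proof -
    have "\<gamma> p + \<gamma> 0 = 0 + \<gamma> p" using g0 by simp
    then have "m (\<gamma> p) = m 0" using eqv by blast
    then show ?thesis using m0 by simp
  qed
  obtain S :: "'q set" where S: "finite S" "\<forall>x. \<exists>xs. set xs \<subseteq> S \<and> x = sum_list xs"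
    using assms(4) unfolding quasi_fine_mon_def fin_gen_mon_def by blast
  define S' where "S' = S - {0}"
  have S'fin: "finite S'" and S'nz: "0 \<notin> S'" using S(1) unfolding S'_def by auto
  have rep: "\<exists>xs. set xs \<subseteq> S' \<and> sum_list xs = q" for q
  proof -
    obtain xs where "set xs \<subseteq> S" "q = sum_list xs" using S(2) by blast
    then show ?thesis
      by (intro exI[of _ "filter (\<lambda>x. x \<noteq> 0) xs"]) (auto simp: S'_def sum_list_filter_nz)
  qed
  define LS where "LS q = {length xs | xs. set xs \<subseteq> S' \<and> sum_list xs = q}" for q
  define L where "L q = Max (LS q)" for q
  have LSfin: "finite (LS q)" for q
    unfolding LS_def using bounded_lengths[OF S'fin S'nz qiQ shQ] by blast
  have LSne: "LS q \<noteq> {}" for q unfolding LS_def using rep[of q] by blast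
  have Lge: "length xs \<le> L q" if "set xs \<subseteq> S'" "sum_list xs = q" for xs q
    unfolding L_def using that LSfin by (intro Max_ge) (auto simp: LS_def)
  have Lwit: "\<exists>xs. set xs \<subseteq> S' \<and> sum_list xs = q \<and> length xs = L q" for q
  proof -
    have "L q \<in> LS q" unfolding L_def using LSfin LSne by (rule Max_in)
    then show ?thesis unfolding LS_def by auto
  qed
  have Lsup: "L x + L y \<le> L (x + y)" for x y
  proof -
    obtain xs where xs: "set xs \<subseteq> S'" "sum_list xs = x" "length xs = L x" using Lwit by blast
    obtain ys where ys: "set ys \<subseteq> S'" "sum_list ys = y" "length ys = L y" using Lwit by blast
    have "length (xs @ ys) \<le> L (x + y)" using xs ys by (intro Lge) auto
    then show ?thesis using xs ys by simp
  qed
  have Lpos: "L x > 0" if "x \<noteq> 0" for x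
  proof (rule ccontr)
    assume "\<not> L x > 0"
    then obtain xs where "sum_list xs = x" "length xs = 0" using Lwit[of x] by auto
    then show False using that by simp
  qed
  have Lstrict: "L q < L (q + x)" if "x \<noteq> 0" for q x
    using Lsup[of q x] Lpos[OF that] by simp
  define s where "s l = arg_min L (\<lambda>q. m q = l)" for l
  have smin: "m (s l) = l \<and> (\<forall>q. m q = l \<longrightarrow> L (s l) \<le> L q)" for l
  proof -
    obtain q where "m q = l" using sur by (metis surjD)
    then show ?thesis unfolding s_def by (rule arg_min_nat_lemma)
  qed
  have sfib: "m (s l) = l" for l using smin by blast
  have sgen: "\<exists>c. q = s l + \<gamma> c" if "m q = l" for q l
  proof -
    have "m (s l) = m q" using sfib that by simp
    then obtain p1 p2 where "s l + \<gamma> p1 = q + \<gamma> p2" using eqv by blast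
    then have "\<gamma> p1 + s l = \<gamma> p2 + q" by (simp add: add.commute)
    then obtain q' a b where ab: "s l = \<gamma> a + q'" "q = \<gamma> b + q'" using flat1 by blast
    have mq': "m q' = l" using ab(1) sfib[of l] by (simp add: madd mg)
    have "\<gamma> a = 0"
    proof (rule ccontr)
      assume "\<gamma> a \<noteq> 0"
      then have "L q' < L (s l)" using Lstrict[of "\<gamma> a" q'] ab(1) by (simp add: add.commute)
      moreover have "L (s l) \<le> L q'" using smin mq' by blast
      ultimately show False by simp
    qed
    then show ?thesis using ab by (intro exI[of _ b]) (simp add: add.commute)
  qed
  have scanc: "a = b" if eqab: "\<gamma> a + s l = \<gamma> b + s l" for a b l
  proof -
    obtain q' p' where qp: "s l = \<gamma> p' + q'" "a + p' = b + p'" using flat2[OF eqab] by blast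
    have "m q' = l" using qp(1) sfib[of l] by (simp add: madd mg)
    then obtain c where c: "q' = s l + \<gamma> c" using sgen by blast
    have "s l = s l + \<gamma> (p' + c)" using qp(1) c by (simp add: gadd ac_simps)
    then have "\<gamma> (p' + c) = 0" using qiQ by metis
    then have "p' + c = 0" using injg g0 by (metis injD)
    then have "p' = 0" using shP by blast
    then show ?thesis using qp(2) by simp
  qed
  have s0: "s 0 = 0"
  proof -
    obtain c where "0 = s 0 + \<gamma> c" using sgen[of 0 0] m0 by blast
    then show ?thesis using shQ by metis
  qed
  define pc where "pc l l' = (SOME c. s l + s l' = s (l + l') + \<gamma> c)" for l l'
  have pc: "s l + s l' = s (l + l') + \<gamma> (pc l l')" for l l'
  proof -
    have "m (s l + s l') = l + l'" by (simp add: madd sfib)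
    then obtain c where "s l + s l' = s (l + l') + \<gamma> c" using sgen by blast
    then show ?thesis unfolding pc_def by (rule someI)
  qed
  have pc_sym: "pc l l' = pc l' l" for l l'
  proof -
    have "\<gamma> (pc l l') + s (l + l') = \<gamma> (pc l' l) + s (l + l')"
      using pc[of l l'] pc[of l' l] by (simp add: ac_simps)
    then show ?thesis by (rule scanc)
  qed
  have pc_zero: "pc 0 l = 0" for l
  proof -
    have "\<gamma> (pc 0 l) + s l = \<gamma> 0 + s l"
      using pc[of 0 l] s0 g0 by (simp add: ac_simps)
    then show ?thesis by (rule scanc)
  qed
  have pc_cocyc: "pc l l' + pc (l + l') l'' = pc l' l'' + pc (l' + l'') l" for l l' l''
  proof -
    have e1: "\<gamma> (pc l l' + pc (l + l') l'') + s (l + l' + l'') = s l + s l' + s l''"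
    proof -
      have "\<gamma> (pc l l' + pc (l + l') l'') + s (l + l' + l'') = \<gamma> (pc l l') + (s (l + l' + l'') + \<gamma> (pc (l + l') l''))"
        by (simp add: gadd ac_simps)
      also have "\<dots> = \<gamma> (pc l l') + (s (l + l') + s l'')" using pc[of "l + l'" l''] by simp
      also have "\<dots> = (s (l + l') + \<gamma> (pc l l')) + s l''" by (simp add: ac_simps)
      also have "\<dots> = s l + s l' + s l''" using pc[of l l'] by simp
      finally show ?thesis .
    qed
    have e2: "\<gamma> (pc l' l'' + pc (l' + l'') l) + s (l' + l'' + l) = s l' + s l'' + s l"
    proof -
      have "\<gamma> (pc l' l'' + pc (l' + l'') l) + s (l' + l'' + l) = \<gamma> (pc l' l'') + (s (l' + l'' + l) + \<gamma> (pc (l' + l'') l))"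
        by (simp add: gadd ac_simps)
      also have "\<dots> = \<gamma> (pc l' l'') + (s (l' + l'') + s l)" using pc[of "l' + l''" l] by simp
      also have "\<dots> = (s (l' + l'') + \<gamma> (pc l' l'')) + s l" by (simp add: ac_simps)
      also have "\<dots> = s l' + s l'' + s l" using pc[of l' l''] by simp
      finally show ?thesis .
    qed
    have "l' + l'' + l = l + l' + l''" by (simp add: ac_simps)
    then have "\<gamma> (pc l l' + pc (l + l') l'') + s (l + l' + l'') =
               \<gamma> (pc l' l'' + pc (l' + l'') l) + s (l + l' + l'')"
      using e1 e2 by (simp add: ac_simps)
    then show ?thesis by (rule scanc)
  qed
  define G where "G M = sum_mset (image_mset (\<lambda>(l, l'). pc l l') M)" for M :: "('a \<times> 'a) multiset"
  have Gadd: "G (M + N) = G M + G N" for M N unfolding G_def by simp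
  have Grel: "PA_rel x y \<Longrightarrow> G x = G y" for x y
  proof (induction rule: PA_rel.induct)
    case (PA_swap l l')
    then show ?case by (simp add: G_def pc_sym)
  next
    case (PA_zero l)
    then show ?case by (simp add: G_def pc_zero)
  next
    case (PA_cocycle l l' l'')
    then show ?case by (simp add: G_def pc_cocyc)
  qed (auto simp: Gadd)
  define g where "g X = G (SOME x. x \<in> X)" for X :: "('a \<times> 'a) multiset set"
  have gclass: "g (PA_class w) = G w" for w
  proof -
    have "w \<in> PA_class w" unfolding PA_class_def by (simp add: PA_refl)
    then have "(SOME x. x \<in> PA_class w) \<in> PA_class w" by (rule someI)
    then have "PA_rel w (SOME x. x \<in> PA_class w)" unfolding PA_class_def by simp
    then show ?thesis unfolding g_def using Grel by metis
  qed
  have gplus: "g (PA_plus X Y) = g X + g Y" for X Y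
    unfolding PA_plus_def gclass by (simp add: Gadd g_def)
  have gzero: "g PA_zero_el = 0" unfolding PA_zero_el_def gclass by (simp add: G_def)
  have ge: "g (PA_e l l') = pc l l'" for l l' unfolding PA_e_def gclass by (simp add: G_def)
  define h where "h x = \<gamma> (g (fst x)) + s (snd x)" for x :: "('a \<times> 'a) multiset set \<times> 'a"
  have "mon_hom_on PA_carrier PA_plus PA_zero_el g"
    unfolding mon_hom_on_def using gplus gzero by simp
  moreover have "mon_hom_on QA_carrier QA_plus QA_zero_el h"
    unfolding mon_hom_on_def
  proof (intro conjI ballI)
    show "h QA_zero_el = 0" unfolding h_def QA_zero_el_def by (simp add: gzero g0 s0)
  next
    fix x y :: "('a \<times> 'a) multiset set \<times> 'a"
    have "h (QA_plus x y) = \<gamma> (g (fst x)) + \<gamma> (g (fst y)) + (s (snd x + snd y) + \<gamma> (pc (snd x) (snd y)))"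
      unfolding h_def QA_plus_def by (simp add: gplus ge gadd ac_simps)
    also have "\<dots> = \<gamma> (g (fst x)) + \<gamma> (g (fst y)) + (s (snd x) + s (snd y))"
      using pc[of "snd x" "snd y"] by simp
    also have "\<dots> = h x + h y" unfolding h_def by (simp add: ac_simps)
    finally show "h (QA_plus x y) = h x + h y" .
  qed
  moreover have "\<forall>p\<in>PA_carrier. h (gamma_A p) = \<gamma> (g p)"
    unfolding h_def gamma_A_def by (simp add: s0)
  moreover have "\<forall>x\<in>QA_carrier. m (h x) = snd x"
    unfolding h_def by (simp add: madd mg sfib)
  ultimately show ?thesis by blast
qed

end
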